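(* Let $B=(B,+,0)$ be a unitary magma and $(X,\varphi)$ a $B$-action, with $X$ regarded as a unitary magma via $x+x'=\varphi(x,0,x',0)$ and neutral element $0$. (1) Let $Z$ be a unitary magma and $u\colon X\to Z$, $v\colon B\to Z$ morphisms of unitary magmas. There is at most one morphism $w\colon X\rtimes_\varphi B\to Z$ with $w(x,0)=u(x)$ for all $x\in X$ and $w(0,b)=v(b)$ for all $b\in B$; if it exists, then $w(x,b)=u(x)+v(b)$. Furthermore, the map $w(x,b)=u(x)+v(b)$ is a morphism of unitary magmas from $X\rtimes_\varphi B$ to $Z$ if and only if $$u(\varphi(x,b,x',b'))+v(b+b')=(u(x)+v(b))+(u(x')+v(b'))$$ for all $(x,b),(x',b')\in X\rtimes_\varphi B$. (2) Let $Z$ be a unitary magma, $f\colon Z\to X$ a map with $f(0)=0$, and $g\colon Z\to B$ a morphism of unitary magmas. Then the assignment $z\mapsto(f(z),g(z))$ is a morphism of unitary magmas from $Z$ to $X\rtimes_\varphi B$ if and only if $f(z_1+z_2)=\varphi(f(z_1),g(z_1),f(z_2),g(z_2))$ for all $z_1,z_2\in Z$.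
   Context: A unitary magma is a set with a binary operation $+$ and an element $0$ with $b+0=b=0+b$ for all $b$; morphisms preserve $+$ and $0$. A $B$-action is a pair $(X,\varphi)$ with $X$ a set and $\varphi\colon X\times B\times X\times B\to X$ a map such that: (1) there is an element $0\in X$ with $\varphi(x,0,0,0)=x=\varphi(0,0,x,0)$ for all $x\in X$; (2) $\varphi(x,b,0,0)=\varphi(x,0,0,b)=\varphi(0,0,x,b)$ for all $x\in X,b\in B$; (3) $\varphi(0,b,0,b')=0$ for all $b,b'\in B$; (4) writing $\varphi_{00}(x,b)=\varphi(x,0,0,b)$, for all $x,x'\in X$, $b,b'\in B$: $\varphi(x,b,x',b')=\varphi_{00}\big(\varphi(\varphi_{00}(x,b),b,\varphi_{00}(x',b'),b'),\,b+b'\big)$. The semidirect product $X\rtimes_\varphi B$ is the set $\{(x,b)\in X\times B\mid\varphi(x,0,0,b)=x\}$ with operation $(x,b)+(x',b')=(\varphi(x,b,x',b'),b+b')$ and neutral element $(0,0)$ (it is a unitary magma). *)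

theory Defs
  imports Main
begin

definition unitary_magma :: "'a set \<Rightarrow> ('a \<Rightarrow> 'a \<Rightarrow> 'a) \<Rightarrow> 'a \<Rightarrow> bool" where
  "unitary_magma M add z \<longleftrightarrow>
     z \<in> M \<and> (\<forall>a\<in>M. \<forall>b\<in>M. add a b \<in> M) \<and> (\<forall>b\<in>M. add b z = b \<and> add z b = b)"

definition um_hom :: "'a set \<Rightarrow> ('a \<Rightarrow> 'a \<Rightarrow> 'a) \<Rightarrow> 'a \<Rightarrow>
                      'c set \<Rightarrow> ('c \<Rightarrow> 'c \<Rightarrow> 'c) \<Rightarrow> 'c \<Rightarrow> ('a \<Rightarrow> 'c) \<Rightarrow> bool" where
  "um_hom A addA zA C addC zC h \<longleftrightarrow>
     (\<forall>a\<in>A. h a \<in> C) \<and> h zA = zC \<and> (\<forall>a\<in>A. \<forall>a'\<in>A. h (addA a a') = addC (h a) (h a'))"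

text \<open>A B-action (X, phi) on the unitary magma (B, addB, zB), with distinguished element zX
(the element 0 of axiom (1); it is unique, being a two-sided unit for x+x' = phi x 0 x' 0).\<close>
definition B_action :: "'b set \<Rightarrow> ('b \<Rightarrow> 'b \<Rightarrow> 'b) \<Rightarrow> 'b \<Rightarrow>
                        'x set \<Rightarrow> ('x \<Rightarrow> 'b \<Rightarrow> 'x \<Rightarrow> 'b \<Rightarrow> 'x) \<Rightarrow> 'x \<Rightarrow> bool" where
  "B_action B addB zB X phi zX \<longleftrightarrow>
     (\<forall>x\<in>X. \<forall>b\<in>B. \<forall>x'\<in>X. \<forall>b'\<in>B. phi x b x' b' \<in> X) \<and>
     zX \<in> X \<and>
     (\<forall>x\<in>X. phi x zB zX zB = x \<and> phi zX zB x zB = x) \<and>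
     (\<forall>x\<in>X. \<forall>b\<in>B. phi x b zX zB = phi x zB zX b \<and> phi x zB zX b = phi zX zB x b) \<and>
     (\<forall>b\<in>B. \<forall>b'\<in>B. phi zX b zX b' = zX) \<and>
     (\<forall>x\<in>X. \<forall>b\<in>B. \<forall>x'\<in>X. \<forall>b'\<in>B.
        phi x b x' b' =
        phi (phi (phi x zB zX b) b (phi x' zB zX b') b') zB zX (addB b b'))"

definition act_add :: "'b \<Rightarrow> ('x \<Rightarrow> 'b \<Rightarrow> 'x \<Rightarrow> 'b \<Rightarrow> 'x) \<Rightarrow> 'x \<Rightarrow> 'x \<Rightarrow> 'x" where
  "act_add zB phi x x' = phi x zB x' zB"

definition sdp_carrier :: "'b set \<Rightarrow> 'b \<Rightarrow> 'x set \<Rightarrow> ('x \<Rightarrow> 'b \<Rightarrow> 'x \<Rightarrow> 'b \<Rightarrow> 'x) \<Rightarrow> 'x \<Rightarrow> ('x \<times> 'b) set" where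
  "sdp_carrier B zB X phi zX = {(x, b). x \<in> X \<and> b \<in> B \<and> phi x zB zX b = x}"

definition sdp_add :: "('b \<Rightarrow> 'b \<Rightarrow> 'b) \<Rightarrow> ('x \<Rightarrow> 'b \<Rightarrow> 'x \<Rightarrow> 'b \<Rightarrow> 'x) \<Rightarrow> 'x \<times> 'b \<Rightarrow> 'x \<times> 'b \<Rightarrow> 'x \<times> 'b" where
  "sdp_add addB phi p q = (phi (fst p) (snd p) (fst q) (snd q), addB (snd p) (snd q))"

end

theory Submission
  imports Defs
begin

theorem proposition4p2:
  fixes B :: "'b set" and addB :: "'b \<Rightarrow> 'b \<Rightarrow> 'b" and zB :: 'b
    and X :: "'x set" and phi :: "'x \<Rightarrow> 'b \<Rightarrow> 'x \<Rightarrow> 'b \<Rightarrow> 'x" and zX :: 'x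
  assumes B: "unitary_magma B addB zB"
    and act: "B_action B addB zB X phi zX"
  shows
    "(\<forall>(Z :: 'z set) addZ zZ u v.
        unitary_magma Z addZ zZ \<and>
        um_hom X (act_add zB phi) zX Z addZ zZ u \<and>
        um_hom B addB zB Z addZ zZ v \<longrightarrow>
        ((\<forall>w w'.
            (um_hom (sdp_carrier B zB X phi zX) (sdp_add addB phi) (zX, zB) Z addZ zZ w \<and>
             (\<forall>x\<in>X. w (x, zB) = u x) \<and> (\<forall>b\<in>B. w (zX, b) = v b)) \<and>
            (um_hom (sdp_carrier B zB X phi zX) (sdp_add addB phi) (zX, zB) Z addZ zZ w' \<and>
             (\<forall>x\<in>X. w' (x, zB) = u x) \<and> (\<forall>b\<in>B. w' (zX, b) = v b))
            \<longrightarrow> (\<forall>p\<in>sdp_carrier B zB X phi zX. w p = w' p)) \<and>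
         (\<forall>w. um_hom (sdp_carrier B zB X phi zX) (sdp_add addB phi) (zX, zB) Z addZ zZ w \<and>
              (\<forall>x\<in>X. w (x, zB) = u x) \<and> (\<forall>b\<in>B. w (zX, b) = v b)
            \<longrightarrow> (\<forall>(x, b)\<in>sdp_carrier B zB X phi zX. w (x, b) = addZ (u x) (v b))) \<and>
         (um_hom (sdp_carrier B zB X phi zX) (sdp_add addB phi) (zX, zB) Z addZ zZ
              (\<lambda>(x, b). addZ (u x) (v b))
          \<longleftrightarrow>
          (\<forall>(x, b)\<in>sdp_carrier B zB X phi zX. \<forall>(x', b')\<in>sdp_carrier B zB X phi zX.
              addZ (u (phi x b x' b')) (v (addB b b')) =
              addZ (addZ (u x) (v b)) (addZ (u x') (v b'))))))
     \<and>
     (\<forall>(Z :: 'w set) addZ zZ f g.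
        unitary_magma Z addZ zZ \<and>
        (\<forall>z\<in>Z. f z \<in> X) \<and> f zZ = zX \<and>
        um_hom Z addZ zZ B addB zB g \<longrightarrow>
        (um_hom Z addZ zZ (sdp_carrier B zB X phi zX) (sdp_add addB phi) (zX, zB)
            (\<lambda>z. (f z, g z))
         \<longleftrightarrow> (\<forall>z1\<in>Z. \<forall>z2\<in>Z. f (addZ z1 z2) = phi (f z1) (g z1) (f z2) (g z2))))"
proof -
  from B have zB: "zB \<in> B" and clB: "\<And>a b. a \<in> B \<Longrightarrow> b \<in> B \<Longrightarrow> addB a b \<in> B"
    and uB: "\<And>b. b \<in> B \<Longrightarrow> addB b zB = b \<and> addB zB b = b"
    unfolding unitary_magma_def by auto
  from act have zX: "zX \<in> X" and clX: "\<And>x b x' b'. x \<in> X \<Longrightarrow> b \<in> B \<Longrightarrow> x' \<in> X \<Longrightarrow> b' \<in> B \<Longrightarrow> phi x b x' b' \<in> X"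
    and a1: "\<And>x. x \<in> X \<Longrightarrow> phi x zB zX zB = x \<and> phi zX zB x zB = x"
    and a2: "\<And>x b. x \<in> X \<Longrightarrow> b \<in> B \<Longrightarrow> phi x b zX zB = phi x zB zX b \<and> phi x zB zX b = phi zX zB x b"
    and a3: "\<And>b b'. b \<in> B \<Longrightarrow> b' \<in> B \<Longrightarrow> phi zX b zX b' = zX"
    unfolding B_action_def by blast+
  have decomp: "sdp_add addB phi (x, zB) (zX, b) = (x, b)" if "(x, b) \<in> sdp_carrier B zB X phi zX" for x b
    using that uB by (auto simp: sdp_add_def sdp_carrier_def)
  have c1: "(x, zB) \<in> sdp_carrier B zB X phi zX" if "x \<in> X" for x
    using that a1 zB by (auto simp: sdp_carrier_def)
  have c2: "(zX, b) \<in> sdp_carrier B zB X phi zX" if "b \<in> B" for b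
    using that a3 zB zX by (auto simp: sdp_carrier_def)
  have P1: "\<forall>w. um_hom (sdp_carrier B zB X phi zX) (sdp_add addB phi) (zX, zB) Z addZ zZ w \<and>
              (\<forall>x\<in>X. w (x, zB) = u x) \<and> (\<forall>b\<in>B. w (zX, b) = v b)
            \<longrightarrow> (\<forall>(x, b)\<in>sdp_carrier B zB X phi zX. w (x, b) = addZ (u x) (v b))" for Z :: "'z set" and addZ zZ u v
  proof (intro allI impI ballI, clarify)
    fix w x b
    assume h: "um_hom (sdp_carrier B zB X phi zX) (sdp_add addB phi) (zX, zB) Z addZ zZ w"
      "\<forall>x\<in>X. w (x, zB) = u x" "\<forall>b\<in>B. w (zX, b) = v b"
      and m: "(x, b) \<in> sdp_carrier B zB X phi zX"
    have xb: "x \<in> X" "b \<in> B" using m by (auto simp: sdp_carrier_def)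
    have "w (x, b) = w (sdp_add addB phi (x, zB) (zX, b))" using decomp[OF m] by simp
    also have "\<dots> = addZ (w (x, zB)) (w (zX, b))"
      using h(1) c1[OF xb(1)] c2[OF xb(2)] unfolding um_hom_def by blast
    finally show "w (x, b) = addZ (u x) (v b)" using h xb by simp
  qed
  show ?thesis
  proof (rule conjI; intro allI impI)
    fix Z :: "'z set" and addZ zZ u v
    assume H: "unitary_magma Z addZ zZ \<and> um_hom X (act_add zB phi) zX Z addZ zZ u \<and> um_hom B addB zB Z addZ zZ v"
    have zZ: "zZ \<in> Z" and clZ: "\<And>a b. a \<in> Z \<Longrightarrow> b \<in> Z \<Longrightarrow> addZ a b \<in> Z"
      and uZ: "\<And>b. b \<in> Z \<Longrightarrow> addZ b zZ = b \<and> addZ zZ b = b"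
      using H unfolding unitary_magma_def by auto
    have uh: "\<And>x. x \<in> X \<Longrightarrow> u x \<in> Z" "u zX = zZ" and vh: "\<And>b. b \<in> B \<Longrightarrow> v b \<in> Z" "v zB = zZ"
      using H unfolding um_hom_def by auto
    note P = P1[of Z addZ zZ u v]
    have pA: "\<forall>w w'.
            (um_hom (sdp_carrier B zB X phi zX) (sdp_add addB phi) (zX, zB) Z addZ zZ w \<and>
             (\<forall>x\<in>X. w (x, zB) = u x) \<and> (\<forall>b\<in>B. w (zX, b) = v b)) \<and>
            (um_hom (sdp_carrier B zB X phi zX) (sdp_add addB phi) (zX, zB) Z addZ zZ w' \<and>
             (\<forall>x\<in>X. w' (x, zB) = u x) \<and> (\<forall>b\<in>B. w' (zX, b) = v b))
            \<longrightarrow> (\<forall>p\<in>sdp_carrier B zB X phi zX. w p = w' p)"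
    proof (intro allI impI ballI)
      fix w w' p
      assume a: "(um_hom (sdp_carrier B zB X phi zX) (sdp_add addB phi) (zX, zB) Z addZ zZ w \<and>
             (\<forall>x\<in>X. w (x, zB) = u x) \<and> (\<forall>b\<in>B. w (zX, b) = v b)) \<and>
            (um_hom (sdp_carrier B zB X phi zX) (sdp_add addB phi) (zX, zB) Z addZ zZ w' \<and>
             (\<forall>x\<in>X. w' (x, zB) = u x) \<and> (\<forall>b\<in>B. w' (zX, b) = v b))"
        and p: "p \<in> sdp_carrier B zB X phi zX"
      obtain x b where pe: "p = (x, b)" by (cases p)
      have "w (x, b) = addZ (u x) (v b)"
        using mp[OF spec[OF P, of w]] a p pe by auto
      moreover have "w' (x, b) = addZ (u x) (v b)"
        using mp[OF spec[OF P, of w']] a p pe by auto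
      ultimately show "w p = w' p" using pe by simp
    qed
    have pB: "\<forall>w. um_hom (sdp_carrier B zB X phi zX) (sdp_add addB phi) (zX, zB) Z addZ zZ w \<and>
              (\<forall>x\<in>X. w (x, zB) = u x) \<and> (\<forall>b\<in>B. w (zX, b) = v b)
            \<longrightarrow> (\<forall>(x, b)\<in>sdp_carrier B zB X phi zX. w (x, b) = addZ (u x) (v b))" by (rule P)
    have pC: "um_hom (sdp_carrier B zB X phi zX) (sdp_add addB phi) (zX, zB) Z addZ zZ
              (\<lambda>(x, b). addZ (u x) (v b))
          \<longleftrightarrow>
          (\<forall>(x, b)\<in>sdp_carrier B zB X phi zX. \<forall>(x', b')\<in>sdp_carrier B zB X phi zX.
              addZ (u (phi x b x' b')) (v (addB b b')) =
              addZ (addZ (u x) (v b)) (addZ (u x') (v b')))"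
    proof -
      have in1: "\<forall>a\<in>sdp_carrier B zB X phi zX. (\<lambda>(x, b). addZ (u x) (v b)) a \<in> Z"
        using uh vh clZ by (auto simp: sdp_carrier_def)
      have in2: "(\<lambda>(x, b). addZ (u x) (v b)) (zX, zB) = zZ" using uh vh uZ zZ by simp
      let ?w = "\<lambda>(x, b). addZ (u x) (v b)"
      let ?C = "sdp_carrier B zB X phi zX"
      show ?thesis
      proof
        assume hom: "um_hom ?C (sdp_add addB phi) (zX, zB) Z addZ zZ ?w"
        show "\<forall>(x, b)\<in>?C. \<forall>(x', b')\<in>?C.
              addZ (u (phi x b x' b')) (v (addB b b')) =
              addZ (addZ (u x) (v b)) (addZ (u x') (v b'))"
        proof (intro ballI, clarify)
          fix x b x' b'
          assume m: "(x, b) \<in> ?C" "(x', b') \<in> ?C"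
          from hom m have "?w (sdp_add addB phi (x, b) (x', b')) = addZ (?w (x, b)) (?w (x', b'))"
            unfolding um_hom_def by blast
          then show "addZ (u (phi x b x' b')) (v (addB b b')) =
              addZ (addZ (u x) (v b)) (addZ (u x') (v b'))" by (simp add: sdp_add_def)
        qed
      next
        assume cond: "\<forall>(x, b)\<in>?C. \<forall>(x', b')\<in>?C.
              addZ (u (phi x b x' b')) (v (addB b b')) =
              addZ (addZ (u x) (v b)) (addZ (u x') (v b'))"
        show "um_hom ?C (sdp_add addB phi) (zX, zB) Z addZ zZ ?w"
          unfolding um_hom_def
        proof (intro conjI in1 in2 ballI)
          fix p q assume m: "p \<in> ?C" "q \<in> ?C"
          obtain x b where pe: "p = (x, b)" by (cases p)
          obtain x' b' where qe: "q = (x', b')" by (cases q)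
          have "addZ (u (phi x b x' b')) (v (addB b b')) =
              addZ (addZ (u x) (v b)) (addZ (u x') (v b'))" using cond m pe qe by blast
          then show "?w (sdp_add addB phi p q) = addZ (?w p) (?w q)"
            using pe qe by (simp add: sdp_add_def)
        qed
      qed
    qed
    show "(\<forall>w w'.
            (um_hom (sdp_carrier B zB X phi zX) (sdp_add addB phi) (zX, zB) Z addZ zZ w \<and>
             (\<forall>x\<in>X. w (x, zB) = u x) \<and> (\<forall>b\<in>B. w (zX, b) = v b)) \<and>
            (um_hom (sdp_carrier B zB X phi zX) (sdp_add addB phi) (zX, zB) Z addZ zZ w' \<and>
             (\<forall>x\<in>X. w' (x, zB) = u x) \<and> (\<forall>b\<in>B. w' (zX, b) = v b))
            \<longrightarrow> (\<forall>p\<in>sdp_carrier B zB X phi zX. w p = w' p)) \<and> (\<forall>w. um_hom (sdp_carrier B zB X phi zX) (sdp_add addB phi) (zX, zB) Z addZ zZ w \<and>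
              (\<forall>x\<in>X. w (x, zB) = u x) \<and> (\<forall>b\<in>B. w (zX, b) = v b)
            \<longrightarrow> (\<forall>(x, b)\<in>sdp_carrier B zB X phi zX. w (x, b) = addZ (u x) (v b))) \<and> (um_hom (sdp_carrier B zB X phi zX) (sdp_add addB phi) (zX, zB) Z addZ zZ
              (\<lambda>(x, b). addZ (u x) (v b))
          \<longleftrightarrow>
          (\<forall>(x, b)\<in>sdp_carrier B zB X phi zX. \<forall>(x', b')\<in>sdp_carrier B zB X phi zX.
              addZ (u (phi x b x' b')) (v (addB b b')) =
              addZ (addZ (u x) (v b)) (addZ (u x') (v b'))))"
      using pA pB pC by (rule conjI[OF _ conjI])
  next
    fix Z :: "'w set" and addZ zZ f g
    assume H: "unitary_magma Z addZ zZ \<and> (\<forall>z\<in>Z. f z \<in> X) \<and> f zZ = zX \<and> um_hom Z addZ zZ B addB zB g"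
    have zZ: "zZ \<in> Z" and uZ: "\<And>b. b \<in> Z \<Longrightarrow> addZ b zZ = b \<and> addZ zZ b = b"
      using H unfolding unitary_magma_def by auto
    have fX: "\<And>z. z \<in> Z \<Longrightarrow> f z \<in> X" and f0: "f zZ = zX"
      and gB: "\<And>z. z \<in> Z \<Longrightarrow> g z \<in> B" and g0: "g zZ = zB"
      and gh: "\<And>a b. a \<in> Z \<Longrightarrow> b \<in> Z \<Longrightarrow> g (addZ a b) = addB (g a) (g b)"
      using H unfolding um_hom_def by auto
    show "um_hom Z addZ zZ (sdp_carrier B zB X phi zX) (sdp_add addB phi) (zX, zB)
            (\<lambda>z. (f z, g z))
         \<longleftrightarrow> (\<forall>z1\<in>Z. \<forall>z2\<in>Z. f (addZ z1 z2) = phi (f z1) (g z1) (f z2) (g z2))"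
    proof
      assume "um_hom Z addZ zZ (sdp_carrier B zB X phi zX) (sdp_add addB phi) (zX, zB) (\<lambda>z. (f z, g z))"
      then show "\<forall>z1\<in>Z. \<forall>z2\<in>Z. f (addZ z1 z2) = phi (f z1) (g z1) (f z2) (g z2)"
        unfolding um_hom_def by (auto simp: sdp_add_def)
    next
      assume R: "\<forall>z1\<in>Z. \<forall>z2\<in>Z. f (addZ z1 z2) = phi (f z1) (g z1) (f z2) (g z2)"
      have car: "phi (f z) zB zX (g z) = f z" if z: "z \<in> Z" for z
      proof -
        have "f z = f (addZ z zZ)" using uZ z by simp
        also have "\<dots> = phi (f z) (g z) zX zB" using R z zZ f0 g0 by simp
        also have "\<dots> = phi (f z) zB zX (g z)" using a2 fX gB z by blast
        finally show ?thesis by simp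
      qed
      show "um_hom Z addZ zZ (sdp_carrier B zB X phi zX) (sdp_add addB phi) (zX, zB) (\<lambda>z. (f z, g z))"
        unfolding um_hom_def
      proof (intro conjI ballI)
        fix z assume "z \<in> Z"
        then show "(f z, g z) \<in> sdp_carrier B zB X phi zX"
          using car fX gB by (simp add: sdp_carrier_def)
      next
        show "(f zZ, g zZ) = (zX, zB)" using f0 g0 by simp
      next
        fix a a' assume "a \<in> Z" "a' \<in> Z"
        then show "(f (addZ a a'), g (addZ a a')) = sdp_add addB phi (f a, g a) (f a', g a')"
          using R gh by (simp add: sdp_add_def)
      qed
    qed
  qed
qed

end
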